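(* Let $\mathbb{B}$ be the open unit ball centered at the origin in $\mathbb{H}$ and let $F:\mathbb{B}\to M_n(\mathbb{H})$ be a quaternionic matrix-valued regular function. If $q\mapsto\Vert F(q)\Vert$ attains its maximum at some point of $\mathbb{B}$, then $\Vert F(q)\Vert$ is constant on $\mathbb{B}$.
   Context: $\mathbb{H}$ denotes the real quaternions. A function $f:\mathbb{B}\to\mathbb{H}$ is (left) regular if it has a power series representation $f(q)=\sum_{n\ge0}q^n f_n$ with $f_n\in\mathbb{H}$ convergent on $\mathbb{B}$ (equivalently, for each imaginary unit $I$ with $I^2=-1$, its restriction to $\mathbb{B}\cap(\mathbb{R}+\mathbb{R}I)$ is holomorphic in the sense $\frac12(\partial_x+I\partial_y)f(x+yI)=0$). $F:\mathbb{B}\to M_n(\mathbb{H})$ is regular if each entry is regular. $\Vert A\Vert=\sup_{x\neq0}\Vert Ax\Vert_2/\Vert x\Vert_2$ is the operator norm of $A\in M_n(\mathbb{H})$ acting on $\mathbb{H}^n$ with the Euclidean norm $\Vert x\Vert_2=(x^*x)^{1/2}$. *)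

theory Defs
  imports "HOL-Analysis.Analysis"
begin

text \<open>The product-type norm is the Euclidean norm on R^4, i.e. the quaternion modulus;
  addition, scaling, limits and series are those of R^4.\<close>

type_synonym quat = "real \<times> real \<times> real \<times> real"

definition qmult :: "quat \<Rightarrow> quat \<Rightarrow> quat" where
  "qmult p q = (case p of (a1, b1, c1, d1) \<Rightarrow> case q of (a2, b2, c2, d2) \<Rightarrow>
     (a1*a2 - b1*b2 - c1*c2 - d1*d2,
      a1*b2 + b1*a2 + c1*d2 - d1*c2,
      a1*c2 - b1*d2 + c1*a2 + d1*b2,
      a1*d2 + b1*c2 - c1*b2 + d1*a2))"

definition qone :: quat where "qone = (1, 0, 0, 0)"

primrec qpow :: "quat \<Rightarrow> nat \<Rightarrow> quat" where
  "qpow q 0 = qone"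
| "qpow q (Suc n) = qmult (qpow q n) q"

definition qball :: "quat set" where "qball = {q. norm q < 1}"

definition regular :: "(quat \<Rightarrow> quat) \<Rightarrow> bool" where
  "regular f \<longleftrightarrow> (\<exists>c :: nat \<Rightarrow> quat. \<forall>q \<in> qball. (\<lambda>n. qmult (qpow q n) (c n)) sums f q)"

text \<open>Matrices in M_n(H) with rows/columns indexed by a finite type 'n (n = CARD('n)).\<close>
type_synonym 'n qmat = "'n \<Rightarrow> 'n \<Rightarrow> quat"

definition regular_mat :: "(quat \<Rightarrow> 'n::finite qmat) \<Rightarrow> bool" where
  "regular_mat F \<longleftrightarrow> (\<forall>i j. regular (\<lambda>q. F q i j))"

definition qmat_vec :: "'n::finite qmat \<Rightarrow> ('n \<Rightarrow> quat) \<Rightarrow> ('n \<Rightarrow> quat)" where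
  "qmat_vec A x = (\<lambda>i. \<Sum>j\<in>UNIV. qmult (A i j) (x j))"

definition qvec_norm :: "('n::finite \<Rightarrow> quat) \<Rightarrow> real" where
  "qvec_norm x = sqrt (\<Sum>i\<in>UNIV. (norm (x i))\<^sup>2)"

definition qop_norm :: "'n::finite qmat \<Rightarrow> real" where
  "qop_norm A = (SUP x \<in> {x. x \<noteq> (\<lambda>_. 0)}. qvec_norm (qmat_vec A x) / qvec_norm x)"

end

theory Submission
  imports Defs "HOL-Complex_Analysis.Conformal_Mappings"
begin

lemma norm_quat: "norm ((a,b,c,d)::quat) = sqrt (a^2+b^2+c^2+d^2)"
  by (simp add: norm_prod_def add.assoc)

lemma qmult_linear_left: "linear (\<lambda>p. qmult p b)"
  by (rule linearI) (auto simp: qmult_def split: prod.splits simp: algebra_simps)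

lemma qmult_linear_right: "linear (\<lambda>p. qmult a p)"
  by (rule linearI) (auto simp: qmult_def split: prod.splits simp: algebra_simps)

lemma qmult_bl_left: "bounded_linear (\<lambda>p. qmult p b)"
  using qmult_linear_left linear_conv_bounded_linear by blast
lemma qmult_bl_right: "bounded_linear (\<lambda>p. qmult a p)"
  using qmult_linear_right linear_conv_bounded_linear by blast

definition sl :: "real \<Rightarrow> real \<Rightarrow> real \<Rightarrow> complex \<Rightarrow> quat" where
  "sl b c d z = (Re z, Im z * b, Im z * c, Im z * d)"

lemma sl_mult: assumes "b^2+c^2+d^2 = 1"
  shows "qmult (sl b c d z) (sl b c d w) = sl b c d (z*w)"
proof -
  have e: "\<And>x. d*(d*x) = x - b*(b*x) - c*(c*x)"
  proof -
    fix x
    have "x*(b^2+c^2+d^2) = x" using assms by simp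
    then show "d*(d*x) = x - b*(b*x) - c*(c*x)" by (simp add: power2_eq_square algebra_simps)
  qed
  show ?thesis unfolding sl_def qmult_def
    by (simp add: algebra_simps e)
qed

lemma sl_one: "sl b c d 1 = qone" by (simp add: sl_def qone_def)

lemma sl_pow: assumes "b^2+c^2+d^2 = 1" shows "qpow (sl b c d z) n = sl b c d (z^n)"
  by (induction n) (simp_all add: sl_one sl_mult[OF assms] mult.commute)

lemma sl_norm: assumes "b^2+c^2+d^2 = 1" shows "norm (sl b c d z) = cmod z"
proof -
  have "(Re z)\<^sup>2 + (Im z * b)\<^sup>2 + (Im z * c)\<^sup>2 + (Im z * d)\<^sup>2 = (Re z)\<^sup>2 + (Im z)^2 * (b^2+c^2+d^2)"
    by (simp add: algebra_simps power_mult_distrib)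
  then show ?thesis using assms by (simp add: sl_def norm_quat cmod_def)
qed

lemma sl_left: "qmult (sl b c d z) p = Re z *\<^sub>R p + Im z *\<^sub>R qmult (0,b,c,d) p"
  by (cases p) (auto simp: sl_def qmult_def algebra_simps)

lemma Iq_sq: assumes "b^2+c^2+d^2 = 1" shows "qmult (0,b,c,d) (qmult (0,b,c,d) p) = - p"
proof -
  obtain p1 p2 p3 p4 where p: "p = (p1,p2,p3,p4)" by (cases p) auto
  have e: "\<And>x. d*(d*x) = x - b*(b*x) - c*(c*x)"
  proof -
    fix x
    have "x*(b^2+c^2+d^2) = x" using assms by simp
    then show "d*(d*x) = x - b*(b*x) - c*(c*x)" by (simp add: power2_eq_square algebra_simps)
  qed
  show ?thesis unfolding p qmult_def by (simp add: algebra_simps e)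
qed

lemma quat_decomp: "\<exists>b c d z. b^2+c^2+d^2 = 1 \<and> q = sl b c d z"
proof -
  obtain a b c d where q: "q = (a,b,c,d)" by (cases q) auto
  show ?thesis
  proof (cases "b^2+c^2+d^2 = 0")
    case True
    then have bcd: "b = 0" "c = 0" "d = 0" by (auto simp: add_nonneg_eq_0_iff)
    show ?thesis unfolding q
      apply (rule exI[of _ "1::real"], rule exI[of _ "0::real"], rule exI[of _ "0::real"], rule exI[of _ "complex_of_real a"])
      using bcd by (simp add: sl_def)
  next
    case False
    define r where "r = sqrt (b^2+c^2+d^2)"
    have pos: "b^2+c^2+d^2 > 0" using False by (smt (verit) zero_le_power2)
    have r: "r > 0" "r^2 = b^2+c^2+d^2" using pos by (auto simp: r_def)
    show ?thesis unfolding q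
      apply (rule exI[of _ "b/r"], rule exI[of _ "c/r"], rule exI[of _ "d/r"], rule exI[of _ "Complex a r"])
      using r pos by (auto simp: sl_def power_divide add_divide_distrib[symmetric])
  qed
qed

definition Lam :: "(quat \<Rightarrow> real) \<Rightarrow> real \<Rightarrow> real \<Rightarrow> real \<Rightarrow> quat \<Rightarrow> complex" where
  "Lam T b c d p = Complex (T p) (- T (qmult (0,b,c,d) p))"

lemma Lam_mult: assumes T: "bounded_linear T" and u: "b^2+c^2+d^2 = 1"
  shows "Lam T b c d (qmult (sl b c d w) p) = w * Lam T b c d p"
proof -
  interpret T: bounded_linear T by fact
  interpret Q: bounded_linear "\<lambda>p. qmult (0,b,c,d) p" by (rule qmult_bl_right)
  have h: "qmult (0,b,c,d) (qmult (sl b c d w) p) = Re w *\<^sub>R qmult (0,b,c,d) p - Im w *\<^sub>R p"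
    by (simp add: sl_left Q.add Q.scaleR Iq_sq[OF u])
  show ?thesis unfolding Lam_def h
    by (simp add: sl_left T.add T.scaleR T.diff complex_eq_iff algebra_simps)
qed

lemma hol_slice:
  assumes f: "regular f" and T: "bounded_linear T" and u: "b^2+c^2+d^2 = 1"
  shows "(\<lambda>z. Lam T b c d (f (sl b c d z))) holomorphic_on ball 0 1"
proof -
  obtain cf where cf: "\<And>q. q \<in> qball \<Longrightarrow> (\<lambda>n. qmult (qpow q n) (cf n)) sums f q"
    using f unfolding regular_def by blast
  interpret T: bounded_linear T by fact
  have bl2: "bounded_linear (\<lambda>p. T (qmult (0,b,c,d) p))"
    by (rule bounded_linear_compose[OF T qmult_bl_right])
  have S: "(\<lambda>n. Lam T b c d (cf n) * z^n) sums Lam T b c d (f (sl b c d z))" if z: "cmod z < 1" for z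
  proof -
    have "sl b c d z \<in> qball" using z by (simp add: qball_def sl_norm[OF u])
    then have s: "(\<lambda>n. qmult (qpow (sl b c d z) n) (cf n)) sums f (sl b c d z)" by (rule cf)
    have s1: "(\<lambda>n. T (qmult (qpow (sl b c d z) n) (cf n))) sums T (f (sl b c d z))"
      by (rule T.sums[OF s])
    have s2: "(\<lambda>n. - T (qmult (0,b,c,d) (qmult (qpow (sl b c d z) n) (cf n)))) sums - T (qmult (0,b,c,d) (f (sl b c d z)))"
      by (rule sums_minus, rule bounded_linear.sums[OF bl2 s])
    have "(\<lambda>n. Lam T b c d (qmult (qpow (sl b c d z) n) (cf n))) sums Lam T b c d (f (sl b c d z))"
      unfolding sums_complex_iff Lam_def using s1 s2 by simp
    then show ?thesis by (simp add: sl_pow[OF u] Lam_mult[OF T u] mult.commute)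
  qed
  have "(\<lambda>z. \<Sum>n. Lam T b c d (cf n) * z^n) holomorphic_on ball 0 1"
  proof (subst holomorphic_on_open, simp, intro ballI exI)
    fix z :: complex assume "z \<in> ball 0 1"
    then show "((\<lambda>z. \<Sum>n. Lam T b c d (cf n) * z^n) has_field_derivative (\<Sum>n. diffs (\<lambda>n. Lam T b c d (cf n)) n * z^n)) (at z)"
      by (intro termdiffs_strong'[where K=1]) (auto dest!: S simp: sums_summable)
  qed
  then show ?thesis
  proof (rule holomorphic_transform)
    fix z :: complex assume "z \<in> ball 0 1"
    then show "(\<Sum>n. Lam T b c d (cf n) * z^n) = Lam T b c d (f (sl b c d z))"
      using S[of z] by (simp add: sums_iff)
  qed
qed

lemma re_max:
  assumes H: "H holomorphic_on ball 0 1" and z0: "z0 \<in> ball (0::complex) 1"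
    and mx: "\<And>z. z \<in> ball 0 1 \<Longrightarrow> Re (H z) \<le> Re (H z0)"
    and z: "z \<in> ball 0 1"
  shows "Re (H z) = Re (H z0)"
proof -
  have E: "(\<lambda>z. exp (H z)) holomorphic_on ball 0 1"
    using H by (intro holomorphic_intros)
  have "(\<lambda>z. exp (H z)) constant_on ball 0 1"
    by (rule maximum_modulus_principle[OF E open_ball connected_ball open_ball order_refl z0])
       (simp add: norm_exp_eq_Re mx)
  then have "exp (H z) = exp (H z0)" using z z0 unfolding constant_on_def by metis
  then have "norm (exp (H z)) = norm (exp (H z0))" by simp
  then show ?thesis by (simp add: norm_exp_eq_Re)
qed

definition Lm :: "'n::finite qmat \<Rightarrow> quat^'n \<Rightarrow> quat^'n" where
  "Lm A v = (\<chi> i. \<Sum>j\<in>UNIV. qmult (A i j) (v$j))"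

lemma Lm_linear: "linear (Lm A)"
proof -
  interpret Q: linear "\<lambda>p. qmult a p" for a by (rule qmult_linear_right)
  show ?thesis
    by (rule linearI) (simp_all add: Lm_def vec_eq_iff Q.add Q.scale sum.distrib scaleR_sum_right)
qed

lemma Lm_bl: "bounded_linear (Lm A)"
  using Lm_linear linear_conv_bounded_linear by blast

lemma qvec_norm_vec: "qvec_norm x = norm (vec_lambda x)"
  by (simp add: qvec_norm_def norm_vec_def L2_set_def)

lemma qmat_vec_Lm: "vec_lambda (qmat_vec A x) = Lm A (vec_lambda x)"
  by (simp add: qmat_vec_def Lm_def)

lemma opnorm_attained:
  fixes A :: "'n::finite qmat"
  shows "\<exists>v. norm v = 1 \<and> qop_norm A = norm (Lm A v) \<and> (\<forall>u. norm (Lm A u) \<le> qop_norm A * norm u)"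
proof -
  interpret L: bounded_linear "Lm A" by (rule Lm_bl)
  obtain v0 :: "quat^'n" where "norm v0 = 1" using vector_choose_size[of 1] by auto
  then have ne: "sphere (0::quat^'n) 1 \<noteq> {}" by auto
  have cont: "continuous_on (sphere 0 1) (\<lambda>u. norm (Lm A u))"
    by (intro continuous_intros L.continuous_on continuous_on_id)
  obtain v where v: "v \<in> sphere 0 1" and vmax: "\<And>y. y \<in> sphere 0 1 \<Longrightarrow> norm (Lm A y) \<le> norm (Lm A v)"
    using continuous_attains_sup[OF compact_sphere ne cont] by blast
  have nv: "norm v = 1" using v by simp
  have B: "norm (Lm A u) \<le> norm (Lm A v) * norm u" for u
  proof (cases "u = 0")
    case True then show ?thesis by (simp add: L.zero)
  next
    case False
    have "inverse (norm u) *\<^sub>R u \<in> sphere 0 1" using False by simp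
    then have "norm (Lm A (inverse (norm u) *\<^sub>R u)) \<le> norm (Lm A v)" by (rule vmax)
    then have "inverse (norm u) * norm (Lm A u) \<le> norm (Lm A v)" by (simp add: L.scaleR)
    then show ?thesis using False by (simp add: field_simps)
  qed
  have Q: "qop_norm A = norm (Lm A v)"
    unfolding qop_norm_def
  proof (rule cSup_eq_maximum)
    have "vec_nth v \<noteq> (\<lambda>_. 0)" using nv by (metis norm_zero vec_nth_inverse zero_neq_one zero_vec_def)
    moreover have "qvec_norm (qmat_vec A (vec_nth v)) / qvec_norm (vec_nth v) = norm (Lm A v)"
      by (simp add: qvec_norm_vec qmat_vec_Lm nv vec_nth_inverse)
    ultimately show "norm (Lm A v) \<in> (\<lambda>x. qvec_norm (qmat_vec A x) / qvec_norm x) ` {x. x \<noteq> (\<lambda>_. 0)}"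
      by (metis (mono_tags, lifting) image_eqI mem_Collect_eq)
  next
    fix r assume "r \<in> (\<lambda>x. qvec_norm (qmat_vec A x) / qvec_norm x) ` {x. x \<noteq> (\<lambda>_. 0)}"
    then obtain x where r: "r = qvec_norm (qmat_vec A x) / qvec_norm x" by blast
    show "r \<le> norm (Lm A v)"
      unfolding r qvec_norm_vec qmat_vec_Lm
      using B[of "vec_lambda x"] by (simp add: divide_le_eq)
  qed
  show ?thesis using nv Q B by auto
qed

lemma slice_const:
  fixes F :: "quat \<Rightarrow> 'n::finite qmat"
  assumes reg: "regular_mat F" and q0: "q0 \<in> qball"
    and mx: "\<And>q. q \<in> qball \<Longrightarrow> qop_norm (F q) \<le> qop_norm (F q0)"
    and u: "b^2+c^2+d^2 = 1" and q0z: "q0 = sl b c d z0" and z: "z \<in> ball 0 1"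
  shows "qop_norm (F (sl b c d z)) = qop_norm (F q0)"
proof -
  define M where "M = qop_norm (F q0)"
  have zq: "sl b c d z \<in> qball" using z by (simp add: qball_def sl_norm[OF u])
  have nn: "qop_norm (F q) \<ge> 0" for q using opnorm_attained[of "F q"] by auto
  obtain v where nv: "norm v = 1" and Mv: "M = norm (Lm (F q0) v)"
    using opnorm_attained[of "F q0"] unfolding M_def by blast
  show ?thesis
  proof (cases "M = 0")
    case True
    then show ?thesis using mx[OF zq] nn[of "sl b c d z"] unfolding M_def by simp
  next
    case False
    then have Mpos: "M > 0" using nn[of q0] unfolding M_def by simp
    define w where "w = (1/M) *\<^sub>R Lm (F q0) v"
    have nw: "norm w = 1" using Mpos Mv by (simp add: w_def)
    define g where "g q = inner w (Lm (F q) v)" for q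
    have gle: "g q \<le> qop_norm (F q)" for q
    proof -
      have "g q \<le> norm w * norm (Lm (F q) v)" unfolding g_def by (rule norm_cauchy_schwarz)
      also have "\<dots> \<le> qop_norm (F q)"
      proof -
        have "\<forall>u. norm (Lm (F q) u) \<le> qop_norm (F q) * norm u" using opnorm_attained[of "F q"] by blast
        then have "norm (Lm (F q) v) \<le> qop_norm (F q) * norm v" by blast
        then show ?thesis using nw nv by simp
      qed
      finally show ?thesis .
    qed
    have gq0: "g q0 = M"
      using Mpos unfolding g_def w_def Mv by (simp add: power2_norm_eq_inner[symmetric] power2_eq_square)
    define T where "T i j p = inner (w$i) (qmult p (v$j))" for i j p
    have Tbl: "bounded_linear (T i j)" for i j
      unfolding T_def by (rule bounded_linear_compose[OF bounded_linear_inner_right qmult_bl_left])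
    define H where "H z = (\<Sum>i\<in>UNIV. \<Sum>j\<in>UNIV. Lam (T i j) b c d (F (sl b c d z) i j))" for z
    have Hhol: "H holomorphic_on ball 0 1"
      unfolding H_def
      by (intro holomorphic_on_sum hol_slice Tbl u) (use reg in \<open>simp add: regular_mat_def\<close>)
    have ReH: "Re (H z) = g (sl b c d z)" for z
      by (simp add: H_def g_def Lam_def T_def inner_vec_def Lm_def inner_sum_right)
    have z0: "z0 \<in> ball 0 1" using q0 q0z by (simp add: qball_def sl_norm[OF u])
    have "Re (H z) = Re (H z0)"
    proof (rule re_max[OF Hhol z0 _ z])
      fix y :: complex assume y: "y \<in> ball 0 1"
      then have "sl b c d y \<in> qball" by (simp add: qball_def sl_norm[OF u])
      then show "Re (H y) \<le> Re (H z0)"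
        using ReH gle[of "sl b c d y"] mx gq0 q0z unfolding M_def by fastforce
    qed
    then have "g (sl b c d z) = M" using ReH gq0 q0z by simp
    then show ?thesis using gle[of "sl b c d z"] mx[OF zq] unfolding M_def by simp
  qed
qed

theorem theorem3p3:
  fixes F :: "quat \<Rightarrow> 'n::finite qmat"
  assumes "regular_mat F"
    and "\<exists>q0 \<in> qball. \<forall>q \<in> qball. qop_norm (F q) \<le> qop_norm (F q0)"
  shows "\<exists>c. \<forall>q \<in> qball. qop_norm (F q) = c"
proof -
  obtain q0 where q0: "q0 \<in> qball" and mx: "\<And>q. q \<in> qball \<Longrightarrow> qop_norm (F q) \<le> qop_norm (F q0)"
    using assms(2) by blast
  obtain b c d z0 where u: "b^2+c^2+d^2 = 1" and q0z: "q0 = sl b c d z0" using quat_decomp by blast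
  have s0: "\<And>b c d. sl b c d 0 = 0" by (simp add: sl_def zero_prod_def)
  have N0: "qop_norm (F 0) = qop_norm (F q0)"
    using slice_const[OF assms(1) q0 mx u q0z, of 0] s0 by simp
  have O: "0 \<in> qball" by (simp add: qball_def)
  have mx0: "\<And>q. q \<in> qball \<Longrightarrow> qop_norm (F q) \<le> qop_norm (F 0)" using mx N0 by simp
  show ?thesis
  proof (intro exI ballI)
    fix q assume q: "q \<in> qball"
    obtain b' c' d' w where u': "b'^2+c'^2+d'^2 = 1" and qw: "q = sl b' c' d' w" using quat_decomp by blast
    have "w \<in> ball 0 1" using q qw by (simp add: qball_def sl_norm[OF u'])
    then show "qop_norm (F q) = qop_norm (F 0)"
      using slice_const[OF assms(1) O mx0 u' s0[of b' c' d', symmetric] ] qw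
      by (simp add: sl_def)
  qed
qed

end
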